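(* Let $r\ge0$ and $p=(p_1,\dots,p_k)\in\mathcal{P}_r$, with extended partition $p^\sharp=(p_1,\dots,p_{k'})$ and symbol $\Lambda_p$ as in the context. Say that row $i$ ($1\le i\le k'$) of $p^\sharp$ ends in a square of $\mathcal{HC}(p)$ if $s_{i,p_i}\in\mathcal{HC}(p)$ or $s_{i,p_i+1}\in\mathcal{HC}(p)$ (i.e., the row terminates in a filled square of $\mathcal{HC}(p)$, or is immediately followed by an empty one). Then the assignment $i\mapsto\widetilde p_i$ identifies the set $Z_1(\Lambda_p)$ of single entries of $\Lambda_p$ with the set of rows of $p^\sharp$ ending in a (perhaps empty) square of $\mathcal{HC}(p)$; this gives a bijection $Z_1(\Lambda_p)\leftrightarrow\mathcal{HC}(p)$.
   Context: A partition $p=(p_1\ge\dots\ge p_k>0)$ is identified with its Young diagram $Y_p$ (rows from the top, columns from the left, starting at $1$); $s_{ij}$ is the square in row $i$, column $j$ (possibly outside $Y_p$). Rank: repeatedly removing dominos (two adjacent squares) so that a Young diagram remains ends at the staircase $(r,r-1,\dots,1)$ for a unique $r\ge0$, the rank of $p$; $\mathcal{P}_r$ is the set of partitions of rank $r$. For $p\in\mathcal{P}_r$, $\mathcal{HC}(p)$ is the set of squares $s_{ij}$ with $i+j\equiv r\pmod2$, $i+j>r+1$, such that adding $s_{ij}$ to $Y_p$ or removing it from $Y_p$ yields a Young diagram; such a square is filled if it lies in $Y_p$ and empty otherwise. Symbols: a symbol of defect $d$ is a two-row array with top row a strictly increasing sequence $\lambda_1<\dots<\lambda_{N+d}$ and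 bottom row a strictly increasing sequence $\mu_1<\dots<\mu_N$ of non-negative integers, considered up to the equivalence generated by replacing it with the symbol with top row $0,\lambda_1+1,\dots,\lambda_{N+d}+N+d$ and bottom row $0,\mu_1+1,\dots,\mu_N+N$. For a symbol $\Lambda$, $Z_1(\Lambda)$ is the set of entries appearing in exactly one of its rows and $Z_2(\Lambda)$ the set of entries appearing in both rows. Given $p=(p_1,\dots,p_k)\in\mathcal{P}_r$, form $p^\sharp=(p_1,\dots,p_{k'})$ by appending one part equal to $0$ if $r\equiv k\pmod 2$ (so $k'=k+1$), and otherwise $p^\sharp=p$ ($k'=k$). The numbers $p_i+k'-i$ ($1\le i\le k'$) split into odd ones $2\mu_j+1$ and even ones $2\lambda_j$; the symbol $\Lambda_p$ has top row the $\lambda_j$ and bottom row the $\mu_j$ (it has defect $r+1$). $\widetilde p_i$ denotes the entry of $\Lambda_p$ determined by the part $p_i$ of $p^\sharp$ (i.e. $\widetilde p_i=\lfloor (p_i+k'-i)/2\rfloor$). *)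

theory Defs
  imports Main
begin

(* A partition is a list of positive naturals, weakly decreasing. Parts are 1-indexed:
   part p i = p_i = p ! (i-1). A square s_ij is the pair (i,j), rows/columns from 1. *)

definition is_partition :: "nat list \<Rightarrow> bool" where
  "is_partition p \<longleftrightarrow> sorted (rev p) \<and> (\<forall>x\<in>set p. 0 < x)"

definition part :: "nat list \<Rightarrow> nat \<Rightarrow> nat" where
  "part p i = p ! (i - 1)"

definition young_diagram :: "nat list \<Rightarrow> (nat \<times> nat) set" where
  "young_diagram p = {(i, j). 1 \<le> i \<and> i \<le> length p \<and> 1 \<le> j \<and> j \<le> part p i}"

definition is_young :: "(nat \<times> nat) set \<Rightarrow> bool" where
  "is_young S \<longleftrightarrow> finite S \<and> (\<forall>(i, j)\<in>S. 1 \<le> i \<and> 1 \<le> j \<and>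
      (\<forall>i' j'. 1 \<le> i' \<and> i' \<le> i \<and> 1 \<le> j' \<and> j' \<le> j \<longrightarrow> (i', j') \<in> S))"

definition adjacent :: "nat \<times> nat \<Rightarrow> nat \<times> nat \<Rightarrow> bool" where
  "adjacent a b \<longleftrightarrow> (fst a = fst b \<and> (snd b = snd a + 1 \<or> snd a = snd b + 1)) \<or>
                     (snd a = snd b \<and> (fst b = fst a + 1 \<or> fst a = fst b + 1))"

definition domino_step :: "(nat \<times> nat) set \<Rightarrow> (nat \<times> nat) set \<Rightarrow> bool" where
  "domino_step S T \<longleftrightarrow> (\<exists>a b. a \<in> S \<and> b \<in> S \<and> adjacent a b \<and>
      T = S - {a, b} \<and> is_young T)"

definition staircase :: "nat \<Rightarrow> nat list" where
  "staircase r = rev [1..<r+1]"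

definition has_rank :: "nat \<Rightarrow> nat list \<Rightarrow> bool" where
  "has_rank r p \<longleftrightarrow> is_partition p \<and>
     domino_step\<^sup>*\<^sup>* (young_diagram p) (young_diagram (staircase r))"

definition HC :: "nat \<Rightarrow> nat list \<Rightarrow> (nat \<times> nat) set" where
  "HC r p = {(i, j). 1 \<le> i \<and> 1 \<le> j \<and> (i + j) mod 2 = r mod 2 \<and> i + j > r + 1 \<and>
      (((i, j) \<notin> young_diagram p \<and> is_young (insert (i, j) (young_diagram p))) \<or>
       ((i, j) \<in> young_diagram p \<and> is_young (young_diagram p - {(i, j)})))}"

definition psharp :: "nat \<Rightarrow> nat list \<Rightarrow> nat list" where
  "psharp r p = (if r mod 2 = length p mod 2 then p @ [0] else p)"

definition beta :: "nat \<Rightarrow> nat list \<Rightarrow> nat \<Rightarrow> nat" where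
  "beta r p i = part (psharp r p) i + length (psharp r p) - i"

(* symbol Lambda_p: top row (set of lambda_j) and bottom row (set of mu_j);
   rows are strictly increasing sequences, represented by their finite sets *)
definition sym_top :: "nat \<Rightarrow> nat list \<Rightarrow> nat set" where
  "sym_top r p = {beta r p i div 2 | i. 1 \<le> i \<and> i \<le> length (psharp r p) \<and> even (beta r p i)}"

definition sym_bot :: "nat \<Rightarrow> nat list \<Rightarrow> nat set" where
  "sym_bot r p = {(beta r p i - 1) div 2 | i. 1 \<le> i \<and> i \<le> length (psharp r p) \<and> odd (beta r p i)}"

definition Z1 :: "nat set \<Rightarrow> nat set \<Rightarrow> nat set" where
  "Z1 T B = (T - B) \<union> (B - T)"

definition ptilde :: "nat \<Rightarrow> nat list \<Rightarrow> nat \<Rightarrow> nat" where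
  "ptilde r p i = beta r p i div 2"

definition HC_rows :: "nat \<Rightarrow> nat list \<Rightarrow> nat set" where
  "HC_rows r p = {i. 1 \<le> i \<and> i \<le> length (psharp r p) \<and>
      ((i, part (psharp r p) i) \<in> HC r p \<or> (i, part (psharp r p) i + 1) \<in> HC r p)}"

definition row_end_square :: "nat \<Rightarrow> nat list \<Rightarrow> nat \<Rightarrow> nat \<times> nat" where
  "row_end_square r p i = (if (i, part (psharp r p) i) \<in> HC r p
      then (i, part (psharp r p) i) else (i, part (psharp r p) i + 1))"

end

theory Submission imports Defs begin


definition colS :: "(nat \<times> nat) set \<Rightarrow> int" where
  "colS S = (\<Sum>s\<in>S. if even (fst s + snd s) then 1 else -1)"

fun colL :: "nat list \<Rightarrow> int" where
  "colL [] = 0" | "colL (x#xs) = (if odd x then 1 else 0) - colL xs"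

fun bl :: "nat list \<Rightarrow> nat list" where
  "bl [] = []" | "bl (x#xs) = (x + length xs) # bl xs"

lemma domino_col: assumes "domino_step S T" shows "colS S = colS T"
proof -
  obtain a b where ab: "a \<in> S" "b \<in> S" "adjacent a b" "T = S - {a,b}" "is_young T"
    using assms unfolding domino_step_def by blast
  have fT: "finite T" using ab(5) unfolding is_young_def by blast
  have ne: "a \<noteq> b" using ab(3) unfolding adjacent_def by auto
  have par: "even (fst a + snd a) \<longleftrightarrow> odd (fst b + snd b)"
    using ab(3) unfolding adjacent_def by auto
  have S: "S = insert a (insert b T)" using ab by auto
  have "a \<notin> insert b T" "b \<notin> T" using ab ne by auto
  then have "colS S = (if even (fst a + snd a) then 1 else -1) + (if even (fst b + snd b) then 1 else -1) + colS T"
    unfolding colS_def S using fT by simp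
  then show ?thesis using par by auto
qed

lemma rt_col: "domino_step\<^sup>*\<^sup>* S T \<Longrightarrow> colS S = colS T"
  by (induction rule: rtranclp.induct) (auto dest: domino_col)

lemma row_sum: "(\<Sum>j\<in>{1..x}. if even (Suc j) then 1 else -1 :: int) = (if odd x then 1 else 0)"
  by (induction x) auto

lemma row_sum': "(\<Sum>j = Suc 0..x. if odd j then 1 else -1 :: int) = (if odd x then 1 else 0)"
  by (induction x) auto

lemma yd_cons: "young_diagram (x#xs) = {(1,j)| j. 1 \<le> j \<and> j \<le> x} \<union> (\<lambda>(i,j). (Suc i, j)) ` young_diagram xs"
proof -
  have "(i,j) \<in> young_diagram (x#xs) \<longleftrightarrow> (i,j) \<in> {(1,j)| j. 1 \<le> j \<and> j \<le> x} \<union> (\<lambda>(i,j). (Suc i, j)) ` young_diagram xs" for i j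
  proof (cases i)
    case 0 then show ?thesis by (auto simp: young_diagram_def)
  next
    case (Suc m)
    show ?thesis
    proof (cases m)
      case 0 then show ?thesis using Suc by (auto simp: young_diagram_def part_def)
    next
      case (Suc m') then show ?thesis using \<open>i = Suc m\<close>
        by (auto simp: young_diagram_def part_def image_iff)
    qed
  qed
  then show ?thesis by auto
qed

lemma fin_yd: "finite (young_diagram xs)"
proof -
  have "young_diagram xs \<subseteq> {0..length xs} \<times> {0..Max (insert 0 (set xs))}"
  proof
    fix s assume "s \<in> young_diagram xs"
    then obtain i j where s: "s = (i,j)" "1 \<le> i" "i \<le> length xs" "j \<le> xs ! (i-1)"
      unfolding young_diagram_def part_def by auto
    have "xs ! (i-1) \<in> set xs" using s by auto
    then have "xs ! (i-1) \<le> Max (insert 0 (set xs))" by simp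
    then show "s \<in> {0..length xs} \<times> {0..Max (insert 0 (set xs))}" using s by (auto intro: order_trans)
  qed
  then show ?thesis by (rule finite_subset) auto
qed

lemma colS_yd: "colS (young_diagram xs) = colL xs"
proof (induction xs)
  case Nil
  have "young_diagram [] = {}" by (auto simp: young_diagram_def)
  then show ?case by (simp add: colS_def)
next
  case (Cons x xs)
  let ?R = "{(1,j)| j. 1 \<le> j \<and> j \<le> x}"
  let ?f = "\<lambda>(i::nat,j::nat). (Suc i, j)"
  have R: "?R = (\<lambda>j. (1,j)) ` {1..x}" by auto
  have d: "?R \<inter> ?f ` young_diagram xs = {}" by (auto simp: young_diagram_def)
  have inj: "inj_on ?f (young_diagram xs)" by (auto simp: inj_on_def)
  have fR: "finite ?R" unfolding R by simp
  have "colS (young_diagram (x#xs)) = colS ?R + colS (?f ` young_diagram xs)"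
    unfolding yd_cons colS_def using d fR fin_yd by (simp add: sum.union_disjoint)
  also have "colS ?R = (if odd x then 1 else 0)"
    unfolding colS_def R by (subst sum.reindex) (auto simp: inj_on_def row_sum')
  also have "colS (?f ` young_diagram xs) = - colS (young_diagram xs)"
    unfolding colS_def using inj by (subst sum.reindex) (auto simp: sum_negf[symmetric] intro!: sum.cong)
  finally show ?case using Cons by simp
qed

lemma stair_Suc: "staircase (Suc r) = Suc r # staircase r"
  by (simp add: staircase_def)

lemma colL_stair: "2 * colL (staircase r) = (if odd r then int r + 1 else - int r)"
  by (induction r) (auto simp: stair_Suc staircase_def)

lemma colL_app0: "colL (xs @ [0]) = colL xs"
  by (induction xs) auto

lemma len_bl: "length (bl xs) = length xs"
  by (induction xs) auto

lemma colL_bl: "2 * colL xs = (if even (length xs)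
   then int (length (filter even (bl xs))) - int (length (filter odd (bl xs)))
   else int (length (filter odd (bl xs))) - int (length (filter even (bl xs))) + 1)"
  by (induction xs) (auto simp: len_bl)

lemma nth_bl: "l < length xs \<Longrightarrow> bl xs ! l + l + 1 = xs ! l + length xs"
proof (induction xs arbitrary: l)
  case Nil then show ?case by simp
next
  case (Cons x xs) then show ?case by (cases l) auto
qed



lemma rem_char:
  assumes memY: "\<And>i j. (i,j) \<in> Y \<longleftrightarrow> 1 \<le> i \<and> 1 \<le> j \<and> j \<le> Q i"
    and mono: "\<And>i1 i2. 1 \<le> i1 \<Longrightarrow> i1 \<le> i2 \<Longrightarrow> Q i2 \<le> Q i1"
    and fin: "finite Y"
  shows "(i,j) \<in> Y \<and> is_young (Y - {(i,j)}) \<longleftrightarrow> 1 \<le> i \<and> 1 \<le> j \<and> j = Q i \<and> Q (Suc i) < j"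
proof
  assume a: "(i,j) \<in> Y \<and> is_young (Y - {(i,j)})"
  then have ij: "1 \<le> i" "1 \<le> j" "j \<le> Q i" using memY by auto
  have dc: "\<And>a b a' b'. (a,b) \<in> Y - {(i,j)} \<Longrightarrow> 1 \<le> a' \<Longrightarrow> a' \<le> a \<Longrightarrow> 1 \<le> b' \<Longrightarrow> b' \<le> b \<Longrightarrow> (a',b') \<in> Y - {(i,j)}"
    using a unfolding is_young_def by blast
  have "\<not> j < Q i"
  proof
    assume "j < Q i"
    then have "(i, Suc j) \<in> Y - {(i,j)}" using ij memY by auto
    from dc[OF this, of i j] ij show False by auto
  qed
  moreover have "\<not> j \<le> Q (Suc i)"
  proof
    assume "j \<le> Q (Suc i)"
    then have "(Suc i, j) \<in> Y - {(i,j)}" using ij memY by auto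
    from dc[OF this, of i j] ij show False by auto
  qed
  ultimately show "1 \<le> i \<and> 1 \<le> j \<and> j = Q i \<and> Q (Suc i) < j" using ij by auto
next
  assume a: "1 \<le> i \<and> 1 \<le> j \<and> j = Q i \<and> Q (Suc i) < j"
  have "(i,j) \<in> Y" using a memY by auto
  moreover have "is_young (Y - {(i,j)})"
    unfolding is_young_def
  proof (intro conjI ballI)
    show "finite (Y - {(i, j)})" using fin by auto
  next
    fix s assume s: "s \<in> Y - {(i,j)}"
    obtain a' b' where s': "s = (a',b')" by force
    have ab: "1 \<le> a'" "1 \<le> b'" "b' \<le> Q a'" "(a',b') \<noteq> (i,j)" using s s' memY by auto
    have "(x, y) \<in> Y - {(i,j)}" if "1 \<le> x" "x \<le> a'" "1 \<le> y" "y \<le> b'" for x y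
    proof -
      have "Q a' \<le> Q x" using mono that by auto
      then have inY: "(x,y) \<in> Y" using that ab memY by auto
      have "(x,y) \<noteq> (i,j)"
      proof
        assume e: "(x,y) = (i,j)"
        show False
        proof (cases "a' = i")
          case True then show ?thesis using e that ab a by auto
        next
          case False
          then have "Suc i \<le> a'" using e that by auto
          then have "Q a' \<le> Q (Suc i)" using mono by auto
          then show ?thesis using e that ab a by auto
        qed
      qed
      then show ?thesis using inY by auto
    qed
    then show "case s of (a, b) \<Rightarrow> 1 \<le> a \<and> 1 \<le> b \<and> (\<forall>i' j'. 1 \<le> i' \<and> i' \<le> a \<and> 1 \<le> j' \<and> j' \<le> b \<longrightarrow> (i', j') \<in> Y - {(i,j)})"
      using s' ab by auto
  qed
  ultimately show "(i,j) \<in> Y \<and> is_young (Y - {(i,j)})" by auto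
qed


lemma add_char:
  assumes memY: "\<And>i j. (i,j) \<in> Y \<longleftrightarrow> 1 \<le> i \<and> 1 \<le> j \<and> j \<le> Q i"
    and mono: "\<And>i1 i2. 1 \<le> i1 \<Longrightarrow> i1 \<le> i2 \<Longrightarrow> Q i2 \<le> Q i1"
    and fin: "finite Y" and ij: "1 \<le> i" "1 \<le> j"
  shows "(i,j) \<notin> Y \<and> is_young (insert (i,j) Y) \<longleftrightarrow> j = Q i + 1 \<and> (i = 1 \<or> j \<le> Q (i - 1))"
proof
  assume a: "(i,j) \<notin> Y \<and> is_young (insert (i,j) Y)"
  then have jq: "Q i < j" using memY ij by auto
  have dc: "\<And>a' b'. 1 \<le> a' \<Longrightarrow> a' \<le> i \<Longrightarrow> 1 \<le> b' \<Longrightarrow> b' \<le> j \<Longrightarrow> (a',b') \<in> insert (i,j) Y"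
    using a unfolding is_young_def by blast
  have "\<not> Q i + 1 < j"
  proof
    assume h: "Q i + 1 < j"
    have "(i, Q i + 1) \<in> insert (i,j) Y" using dc[of i "Q i + 1"] h ij by auto
    then show False using h memY by auto
  qed
  moreover have "\<not> (i \<noteq> 1 \<and> Q (i - 1) < j)"
  proof
    assume h: "i \<noteq> 1 \<and> Q (i - 1) < j"
    have "(i - 1, j) \<in> insert (i,j) Y" using dc[of "i - 1" j] h ij by auto
    then show False using h ij memY by auto
  qed
  ultimately show "j = Q i + 1 \<and> (i = 1 \<or> j \<le> Q (i - 1))" using jq by auto
next
  assume a: "j = Q i + 1 \<and> (i = 1 \<or> j \<le> Q (i - 1))"
  have "(i,j) \<notin> Y" using a memY by auto
  moreover have "is_young (insert (i,j) Y)"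
    unfolding is_young_def
  proof (intro conjI ballI)
    show "finite (insert (i, j) Y)" using fin by auto
  next
    fix s assume s: "s \<in> insert (i,j) Y"
    obtain a' b' where s': "s = (a',b')" by force
    have "(x, y) \<in> insert (i,j) Y \<and> 1 \<le> a' \<and> 1 \<le> b'" if "1 \<le> x" "x \<le> a'" "1 \<le> y" "y \<le> b'" for x y
    proof (cases "(a',b') = (i,j)")
      case True
      show ?thesis
      proof (cases "x = i")
        case True
        then show ?thesis using \<open>(a',b') = (i,j)\<close> that a memY ij by (cases "y = j") auto
      next
        case False
        then have "x < i" "i \<noteq> 1" using \<open>(a',b') = (i,j)\<close> that by auto
        then have "Q (i - 1) \<le> Q x" using mono that by auto
        then show ?thesis using \<open>(a',b') = (i,j)\<close> that a memY ij \<open>i \<noteq> 1\<close> by auto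
      qed
    next
      case False
      then have ab: "1 \<le> a'" "1 \<le> b'" "b' \<le> Q a'" using s s' memY by auto
      have "Q a' \<le> Q x" using mono that by auto
      then show ?thesis using that ab memY by auto
    qed
    moreover have "1 \<le> a' \<and> 1 \<le> b'" using s s' memY ij by auto
    ultimately show "case s of (a, b) \<Rightarrow> 1 \<le> a \<and> 1 \<le> b \<and> (\<forall>i' j'. 1 \<le> i' \<and> i' \<le> a \<and> 1 \<le> j' \<and> j' \<le> b \<longrightarrow> (i', j') \<in> insert (i,j) Y)"
      using s' by auto
  qed
  ultimately show "(i,j) \<notin> Y \<and> is_young (insert (i,j) Y)" by auto
qed



lemma cnt1: "card {c::nat. even c \<and> c \<le> b} \<le> b div 2 + 1"
proof -
  have "{c::nat. even c \<and> c \<le> b} \<subseteq> (\<lambda>m. 2*m) ` {..b div 2}" by (auto elim!: evenE)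
  then have "card {c::nat. even c \<and> c \<le> b} \<le> card ((\<lambda>m. 2*m) ` {..b div 2})" by (rule card_mono[rotated]) auto
  also have "\<dots> \<le> b div 2 + 1" using card_image_le[of "{..b div 2}" "\<lambda>m. 2*m"] by simp
  finally show ?thesis .
qed

lemma cnt2: "card {c::nat. even c \<and> Suc c < b} \<le> b div 2"
proof -
  have "{c::nat. even c \<and> Suc c < b} \<subseteq> (\<lambda>m. 2*m) ` {..<b div 2}" by (auto elim!: evenE)
  then have "card {c::nat. even c \<and> Suc c < b} \<le> card ((\<lambda>m. 2*m) ` {..<b div 2})" by (rule card_mono[rotated]) auto
  also have "\<dots> \<le> b div 2" using card_image_le[of "{..<b div 2}" "\<lambda>m. 2*m"] by simp
  finally show ?thesis .
qed

lemma parity_aux: "(b::nat) + l + 1 = a + n \<Longrightarrow> n mod 2 \<noteq> r mod 2 \<Longrightarrow> ((Suc l + a) mod 2 = r mod 2 \<longleftrightarrow> odd b)"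
proof -
  assume h1: "b + l + 1 = a + n" and h2: "n mod 2 \<noteq> r mod 2"
  have e1: "even (b + l + 1) = even (a + n)" using h1 by simp
  have e2: "even n \<noteq> even r" using h2 by (auto simp: mod2_eq_if split: if_splits)
  show ?thesis using e1 e2 by (auto simp: mod2_eq_if)
qed

lemma E2_aux: "int E - int D = int r + 1 \<Longrightarrow> E + D = n \<Longrightarrow> 2*E = n + r + 1"
  by linarith

lemma par_aux2: "((x::nat) mod 2 = r mod 2 \<longleftrightarrow> odd (b::nat)) \<Longrightarrow> ((Suc x) mod 2 = r mod 2 \<longleftrightarrow> even b)"
  by (auto simp: mod2_eq_if split: if_splits)

lemma div_aux: "(a::nat) div 2 = b div 2 \<Longrightarrow> a \<noteq> b \<Longrightarrow> (a = 2*(a div 2) \<and> b = Suc (2*(a div 2))) \<or> (b = 2*(a div 2) \<and> a = Suc (2*(a div 2)))"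
proof -
  assume h: "a div 2 = b div 2" "a \<noteq> b"
  have ea: "a = 2*(a div 2) + a mod 2" and eb: "b = 2*(b div 2) + b mod 2" by simp_all
  have "a mod 2 = 0 \<or> a mod 2 = 1" "b mod 2 = 0 \<or> b mod 2 = 1" by auto
  then show ?thesis using ea eb h by auto
qed

theorem mainTheorem3:
  fixes r :: nat and p :: "nat list"
  assumes "has_rank r p"
  shows "bij_betw (ptilde r p) (HC_rows r p) (Z1 (sym_top r p) (sym_bot r p)) \<and>
         bij_betw (row_end_square r p) (HC_rows r p) (HC r p) \<and>
         (\<exists>f. bij_betw f (Z1 (sym_top r p) (sym_bot r p)) (HC r p))"
proof -
  define q where "q = psharp r p"
  define n where "n = length q"
  define k where "k = length p"
  define Q where "Q i = (if 1 \<le> i \<and> i \<le> n then q!(i-1) else 0)" for i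
  define B where "B l = bl q ! l" for l
  define Y where "Y = young_diagram p"
  have ispart: "is_partition p" using assms unfolding has_rank_def by blast
  have qdef: "q = (if r mod 2 = k mod 2 then p@[0] else p)" unfolding q_def psharp_def by (simp add: k_def)
  have nk: "n = (if r mod 2 = k mod 2 then Suc k else k)" unfolding n_def qdef by (simp add: k_def)
  have npar: "n mod 2 \<noteq> r mod 2" using nk by presburger
  have qnth: "l < k \<Longrightarrow> q!l = p!l" for l unfolding qdef k_def by (simp add: nth_append)
  have qk: "n = Suc k \<Longrightarrow> q!k = 0" unfolding qdef using nk k_def by (auto simp: nth_append split: if_splits)
  have ppos: "l < k \<Longrightarrow> 0 < p!l" for l using ispart unfolding is_partition_def k_def by auto
  have srt: "sorted (rev q)" using ispart unfolding is_partition_def qdef by auto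
  have qmono: "l1 \<le> l2 \<Longrightarrow> l2 < n \<Longrightarrow> q!l2 \<le> q!l1" for l1 l2
    using sorted_rev_nth_mono[OF srt] n_def by blast
  have memY: "(i,j) \<in> Y \<longleftrightarrow> 1 \<le> i \<and> 1 \<le> j \<and> j \<le> Q i" for i j
  proof (cases "i \<le> k")
    case True
    then have "i \<le> n" using nk by auto
    then show ?thesis using True qnth[of "i-1"] unfolding Y_def young_diagram_def part_def Q_def k_def by auto
  next
    case False
    have "Q i = 0"
    proof (cases "1 \<le> i \<and> i \<le> n")
      case True
      then have "i = Suc k" "n = Suc k" using False nk by (auto split: if_splits)
      then show ?thesis using qk unfolding Q_def by simp
    next
      case False
      then show ?thesis unfolding Q_def by auto
    qed
    then show ?thesis using False unfolding Y_def young_diagram_def part_def k_def by auto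
  qed
  have Qmono: "1 \<le> i1 \<Longrightarrow> i1 \<le> i2 \<Longrightarrow> Q i2 \<le> Q i1" for i1 i2
    unfolding Q_def using qmono by auto
  have Qpos: "1 \<le> i \<Longrightarrow> 1 \<le> Q i \<Longrightarrow> i \<le> k" for i
  proof (rule ccontr)
    assume h: "1 \<le> i" "1 \<le> Q i" "\<not> i \<le> k"
    then have "i \<le> n" unfolding Q_def by (auto split: if_splits)
    then have "i = Suc k" "n = Suc k" using h nk by (auto split: if_splits)
    then show False using h qk unfolding Q_def by simp
  qed
  have finY: "finite Y" unfolding Y_def by (rule fin_yd)

  have R: "(i,j) \<in> Y \<and> is_young (Y - {(i,j)}) \<longleftrightarrow> 1 \<le> i \<and> 1 \<le> j \<and> j = Q i \<and> Q (Suc i) < j" for i j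
    by (rule rem_char[OF memY Qmono finY])
  have A: "1 \<le> i \<Longrightarrow> 1 \<le> j \<Longrightarrow> (i,j) \<notin> Y \<and> is_young (insert (i,j) Y) \<longleftrightarrow> j = Q i + 1 \<and> (i = 1 \<or> j \<le> Q (i - 1))" for i j
    by (rule add_char[OF memY Qmono finY])
  have HCchar: "(i,j) \<in> HC r p \<longleftrightarrow> 1 \<le> i \<and> 1 \<le> j \<and> (i+j) mod 2 = r mod 2 \<and> r+1 < i+j \<and>
      ((j = Q i + 1 \<and> (i = 1 \<or> j \<le> Q (i - 1))) \<or> (j = Q i \<and> Q (Suc i) < j))" for i j
    unfolding HC_def Y_def[symmetric] using R[of i j] A[of i j] by auto
  have c1: "colL p = colL (staircase r)"
    using rt_col[of "young_diagram p" "young_diagram (staircase r)"] assms colS_yd unfolding has_rank_def by simp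
  have c2: "colL q = colL p" using colL_app0 qdef by simp
  define E where "E = card {l. l < n \<and> even (B l)}"
  define Od where "Od = card {l. l < n \<and> odd (B l)}"
  have EOc: "2 * colL q = (if even n then int E - int Od else int Od - int E + 1)"
    using colL_bl[of q] unfolding length_filter_conv_card len_bl E_def Od_def B_def n_def by simp
  have EO: "int E - int Od = int r + 1"
  proof (cases "even r")
    case True
    then have "odd n" using npar by presburger
    then show ?thesis using EOc c1 c2 colL_stair[of r] True by auto
  next
    case False
    then have "even n" using npar by presburger
    then show ?thesis using EOc c1 c2 colL_stair[of r] False by auto
  qed
  have EOn: "E + Od = n"
  proof -
    have "{l. l < n \<and> even (B l)} \<union> {l. l < n \<and> odd (B l)} = {..<n}" by auto
    moreover have "card ({l. l < n \<and> even (B l)} \<union> {l. l < n \<and> odd (B l)}) = E + Od"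
      unfolding E_def Od_def by (rule card_Un_disjoint) auto
    ultimately show ?thesis by simp
  qed
  have Bl: "l < n \<Longrightarrow> B l + l + 1 = q!l + n" for l unfolding B_def n_def by (rule nth_bl)
  have beta: "1 \<le> i \<Longrightarrow> i \<le> n \<Longrightarrow> beta r p i = B (i-1)" for i
  proof -
    assume i: "1 \<le> i" "i \<le> n"
    then have "B (i-1) + i = q!(i-1) + n" using Bl[of "i-1"] by simp
    then show ?thesis unfolding beta_def part_def q_def[symmetric] n_def[symmetric] by linarith
  qed
  have Bdec: "l1 < l2 \<Longrightarrow> l2 < n \<Longrightarrow> B l2 < B l1" for l1 l2
    using Bl[of l1] Bl[of l2] qmono[of l1 l2] by simp
  define Bs where "Bs = B ` {..<n}"
  have top: "x \<in> sym_top r p \<longleftrightarrow> 2*x \<in> Bs" for x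
  proof
    assume "x \<in> sym_top r p"
    then obtain i where i: "x = beta r p i div 2" "1 \<le> i" "i \<le> n" "even (beta r p i)"
      unfolding sym_top_def q_def[symmetric] n_def[symmetric] by blast
    then have "2*x = B (i-1)" "i - 1 < n" using beta by auto
    then show "2*x \<in> Bs" unfolding Bs_def by auto
  next
    assume "2*x \<in> Bs"
    then obtain l where l: "l < n" "2*x = B l" unfolding Bs_def by auto
    then have "beta r p (Suc l) = 2*x" using beta[of "Suc l"] by simp
    moreover have "even (B l)" using l(2)[symmetric] by simp
    ultimately show "x \<in> sym_top r p" unfolding sym_top_def q_def[symmetric] n_def[symmetric] using l(1)
      by (intro CollectI exI[of _ "Suc l"]) auto
  qed
  have bot: "x \<in> sym_bot r p \<longleftrightarrow> Suc (2*x) \<in> Bs" for x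
  proof
    assume "x \<in> sym_bot r p"
    then obtain i where i: "x = (beta r p i - 1) div 2" "1 \<le> i" "i \<le> n" "odd (beta r p i)"
      unfolding sym_bot_def q_def[symmetric] n_def[symmetric] by blast
    then have "Suc (2*x) = B (i-1)" "i - 1 < n" using beta by (auto elim!: oddE)
    then show "Suc (2*x) \<in> Bs" unfolding Bs_def by auto
  next
    assume "Suc (2*x) \<in> Bs"
    then obtain l where l: "l < n" "Suc (2*x) = B l" unfolding Bs_def by auto
    then have "beta r p (Suc l) = Suc (2*x)" using beta[of "Suc l"] by simp
    moreover have "odd (B l)" using l(2)[symmetric] by simp
    ultimately show "x \<in> sym_bot r p" unfolding sym_bot_def q_def[symmetric] n_def[symmetric] using l(1)
      by (intro CollectI exI[of _ "Suc l"]) auto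
  qed
  have Z1c: "x \<in> Z1 (sym_top r p) (sym_bot r p) \<longleftrightarrow> (2*x \<in> Bs) \<noteq> (Suc (2*x) \<in> Bs)" for x
    unfolding Z1_def using top bot by auto

  have injB: "inj_on B {..<n}"
  proof (rule inj_onI)
    fix a b assume "a \<in> {..<n}" "b \<in> {..<n}" "B a = B b"
    then show "a = b" using Bdec[of a b] Bdec[of b a] by (cases a b rule: linorder_cases) auto
  qed
  have adj: "m < n \<Longrightarrow> l < n \<Longrightarrow> (B m = Suc (B l)) = (Suc m = l \<and> q!m = q!l)" for m l
  proof
    assume h: "m < n" "l < n" "B m = Suc (B l)"
    have "m < l" using h Bdec[of l m] by (cases m l rule: linorder_cases) auto
    moreover have "\<not> Suc m < l" using h Bdec[of m "Suc m"] Bdec[of "Suc m" l] by auto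
    ultimately have "Suc m = l" by auto
    then show "Suc m = l \<and> q!m = q!l" using h Bl[of m] Bl[of l] by auto
  next
    assume h: "m < n" "l < n" "Suc m = l \<and> q!m = q!l"
    then show "B m = Suc (B l)" using Bl[of m] Bl[of l] by auto
  qed
  have minus: "l < n \<Longrightarrow> odd (B l) \<Longrightarrow> (B l - 1 \<in> Bs \<longleftrightarrow> Suc l < n \<and> q!(Suc l) = q!l)" for l
  proof -
    assume h: "l < n" "odd (B l)"
    then have "1 \<le> B l" by (cases "B l") auto
    have "B l - 1 \<in> Bs \<longleftrightarrow> (\<exists>m<n. B l = Suc (B m))" unfolding Bs_def using \<open>1 \<le> B l\<close> by force
    also have "\<dots> \<longleftrightarrow> (\<exists>m<n. Suc l = m \<and> q!l = q!m)" using adj h(1) by blast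
    finally show ?thesis by auto
  qed
  have plus: "l < n \<Longrightarrow> (Suc (B l) \<in> Bs \<longleftrightarrow> 0 < l \<and> q!(l-1) = q!l)" for l
  proof -
    assume h: "l < n"
    have "Suc (B l) \<in> Bs \<longleftrightarrow> (\<exists>m<n. B m = Suc (B l))" unfolding Bs_def by force
    also have "\<dots> \<longleftrightarrow> (\<exists>m<n. Suc m = l \<and> q!m = q!l)" using adj h(1) by blast
    also have "\<dots> \<longleftrightarrow> 0 < l \<and> q!(l-1) = q!l" using h by (cases l) auto
    finally show ?thesis .
  qed
  have par: "l < n \<Longrightarrow> ((Suc l + q!l) mod 2 = r mod 2 \<longleftrightarrow> odd (B l))" for l
  proof -
    assume h: "l < n"
    show ?thesis by (rule parity_aux[OF Bl[OF h] npar])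
  qed
  have E2: "2*E = n + r + 1" using EO EOn by (rule E2_aux)
  have cntE: "l < n \<Longrightarrow> even (B l) \<Longrightarrow> 2*E \<le> 2*l + B l + 2" for l
  proof -
    assume h: "l < n" "even (B l)"
    define S2 where "S2 = {m. l \<le> m \<and> m < n \<and> even (B m)}"
    have "{m. m < n \<and> even (B m)} \<subseteq> {..<l} \<union> S2" unfolding S2_def by auto
    then have "E \<le> card ({..<l} \<union> S2)" unfolding E_def by (rule card_mono[rotated]) (simp add: S2_def)
    also have "\<dots> \<le> l + card S2" using card_Un_le[of "{..<l}" S2] by simp
    also have "card S2 = card (B ` S2)" using injB by (intro card_image[symmetric]) (auto simp: S2_def intro: inj_on_subset)
    also have "card (B ` S2) \<le> card {c. even c \<and> c \<le> B l}"
    proof (rule card_mono)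
      show "finite {c. even c \<and> c \<le> B l}" by simp
      show "B ` S2 \<subseteq> {c. even c \<and> c \<le> B l}" unfolding S2_def using Bdec[of l] h
        by (auto simp: le_less)
    qed
    also have "\<dots> \<le> B l div 2 + 1" by (rule cnt1)
    finally show ?thesis using h(2) by auto
  qed
  have cntO: "l < n \<Longrightarrow> odd (B l) \<Longrightarrow> B l - 1 \<notin> Bs \<Longrightarrow> 2*E \<le> 2*l + B l + 1" for l
  proof -
    assume h: "l < n" "odd (B l)" "B l - 1 \<notin> Bs"
    define S2 where "S2 = {m. l < m \<and> m < n \<and> even (B m)}"
    have "{m. m < n \<and> even (B m)} \<subseteq> {..<l} \<union> S2" unfolding S2_def using h(2)
      by (auto simp: not_less_iff_gr_or_eq)
    then have "E \<le> card ({..<l} \<union> S2)" unfolding E_def by (rule card_mono[rotated]) (simp add: S2_def)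
    also have "\<dots> \<le> l + card S2" using card_Un_le[of "{..<l}" S2] by simp
    also have "card S2 = card (B ` S2)" using injB by (intro card_image[symmetric]) (auto simp: S2_def intro: inj_on_subset)
    also have "card (B ` S2) \<le> card {c. even c \<and> Suc c < B l}"
    proof (rule card_mono)
      show "finite {c. even c \<and> Suc c < B l}" by (rule finite_subset[of _ "{..<B l}"]) auto
      show "B ` S2 \<subseteq> {c. even c \<and> Suc c < B l}"
      proof
        fix c assume "c \<in> B ` S2"
        then obtain m where m: "l < m" "m < n" "even (B m)" "c = B m" unfolding S2_def by auto
        have "B m < B l" using Bdec m h by auto
        moreover have "B m \<noteq> B l - 1"
        proof
          assume "B m = B l - 1"
          then have "B l - 1 \<in> Bs" unfolding Bs_def using m(2) by (metis imageI lessThan_iff)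
          then show False using h(3) by simp
        qed
        moreover have "B m \<noteq> B l - 1 \<Longrightarrow> B m < B l \<Longrightarrow> even (B m) \<Longrightarrow> odd (B l) \<Longrightarrow> Suc (B m) < B l"
          by (metis Suc_lessI diff_Suc_1 even_Suc)
        ultimately show "c \<in> {c. even c \<and> Suc c < B l}" using m h by auto
      qed
    qed
    also have "\<dots> \<le> B l div 2" by (rule cnt2)
    finally have "E \<le> l + B l div 2" by simp
    moreover have "2 * (B l div 2) + 1 = B l" using h(2) by simp
    ultimately show ?thesis by linarith
  qed

  have rows': "i \<in> HC_rows r p \<longleftrightarrow> 1 \<le> i \<and> i \<le> n \<and> ((i, Q i) \<in> HC r p \<or> (i, Q i + 1) \<in> HC r p)" for i
    unfolding HC_rows_def q_def[symmetric] n_def[symmetric] Q_def part_def by auto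
  have QS: "l < n \<Longrightarrow> Q (Suc l) = q!l" for l unfolding Q_def by simp
  have QSS: "Q (Suc (Suc l)) = (if Suc l < n then q!(Suc l) else 0)" for l unfolding Q_def by simp
  have QL: "l < n \<Longrightarrow> Q l = (if 0 < l then q!(l-1) else 0)" for l unfolding Q_def by auto
  have rowc: "l < n \<Longrightarrow> (Suc l \<in> HC_rows r p \<longleftrightarrow> B l div 2 \<in> Z1 (sym_top r p) (sym_bot r p))" for l
  proof -
    assume l: "l < n"
    have p1: "(Suc l + q!l) mod 2 = r mod 2 \<longleftrightarrow> odd (B l)" using par l by blast
    have p2: "(Suc (Suc l + q!l)) mod 2 = r mod 2 \<longleftrightarrow> even (B l)" by (rule par_aux2[OF p1])
    show ?thesis
    proof (cases "even (B l)")
      case True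
      have z: "B l div 2 \<in> Z1 (sym_top r p) (sym_bot r p) \<longleftrightarrow> Suc (B l) \<notin> Bs"
        using Z1c[of "B l div 2"] True l unfolding Bs_def by auto
      have n1: "(Suc l, Q (Suc l)) \<notin> HC r p" using HCchar[of "Suc l" "Q (Suc l)"] p1 True QS[OF l] by auto
      have "(Suc l, Q (Suc l) + 1) \<in> HC r p \<longleftrightarrow> Suc (B l) \<notin> Bs"
      proof
        assume "(Suc l, Q (Suc l) + 1) \<in> HC r p"
        then have "l = 0 \<or> q!l + 1 \<le> q!(l-1)"
          using HCchar[of "Suc l" "Q (Suc l) + 1"] QS[OF l] QL[OF l] by (auto split: if_splits)
        then show "Suc (B l) \<notin> Bs" using plus[OF l] by auto
      next
        assume h: "Suc (B l) \<notin> Bs"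
        then have a: "l = 0 \<or> q!l + 1 \<le> q!(l-1)" using plus[OF l] qmono[of "l-1" l] l by auto
        have "2*E \<le> 2*l + B l + 2" using cntE l True by blast
        then have s: "r + 1 < Suc l + (q!l + 1)" using E2 Bl[OF l] by linarith
        show "(Suc l, Q (Suc l) + 1) \<in> HC r p"
          using HCchar[of "Suc l" "Q (Suc l) + 1"] QS[OF l] QL[OF l] a s p2 True by auto
      qed
      then show ?thesis using z n1 rows'[of "Suc l"] l by auto
    next
      case False
      have z: "B l div 2 \<in> Z1 (sym_top r p) (sym_bot r p) \<longleftrightarrow> B l - 1 \<notin> Bs"
      proof -
        have "2 * (B l div 2) = B l - 1" "Suc (2 * (B l div 2)) = B l" using odd_two_times_div_two_succ[of "B l"] False by auto
        moreover have "B l \<in> Bs" using l unfolding Bs_def by auto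
        ultimately show ?thesis using Z1c[of "B l div 2"] by auto
      qed
      have n1: "(Suc l, Q (Suc l) + 1) \<notin> HC r p" using HCchar[of "Suc l" "Q (Suc l) + 1"] p2 False QS[OF l] by auto
      have qpos: "1 \<le> q!l"
      proof (rule ccontr)
        assume "\<not> 1 \<le> q!l"
        then have q0: "q!l = 0" by simp
        have "\<not> l < k" using ppos[of l] qnth[of l] q0 by auto
        then have "l = k" "n = Suc k" using l nk by (auto split: if_splits)
        then have "B l = 0" using Bl[OF l] q0 by simp
        then show False using False by simp
      qed
      have "(Suc l, Q (Suc l)) \<in> HC r p \<longleftrightarrow> B l - 1 \<notin> Bs"
      proof
        assume "(Suc l, Q (Suc l)) \<in> HC r p"
        then have "Q (Suc (Suc l)) < q!l"
          using HCchar[of "Suc l" "Q (Suc l)"] QS[OF l] by auto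
        then show "B l - 1 \<notin> Bs" using minus[OF l] False QSS[of l] by (auto split: if_splits)
      next
        assume h: "B l - 1 \<notin> Bs"
        then have a: "Q (Suc (Suc l)) < q!l" using minus[OF l] False QSS[of l] qmono[of l "Suc l"] qpos
          by (auto split: if_splits)
        have "2*E \<le> 2*l + B l + 1" using cntO l False h by blast
        then have s: "r + 1 < Suc l + q!l" using E2 Bl[OF l] by linarith
        show "(Suc l, Q (Suc l)) \<in> HC r p"
          using HCchar[of "Suc l" "Q (Suc l)"] QS[OF l] a s p1 False qpos by auto
      qed
      then show ?thesis using z n1 rows'[of "Suc l"] l by auto
    qed
  qed

  have pt: "1 \<le> i \<Longrightarrow> i \<le> n \<Longrightarrow> ptilde r p i = B (i-1) div 2" for i
    unfolding ptilde_def using beta by simp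
  have rowsn: "i \<in> HC_rows r p \<Longrightarrow> 1 \<le> i \<and> i \<le> n" for i using rows' by blast
  have bij1: "bij_betw (ptilde r p) (HC_rows r p) (Z1 (sym_top r p) (sym_bot r p))"
    unfolding bij_betw_def
  proof
    show "inj_on (ptilde r p) (HC_rows r p)"
    proof (rule inj_onI)
      fix i1 i2 assume i: "i1 \<in> HC_rows r p" "i2 \<in> HC_rows r p" "ptilde r p i1 = ptilde r p i2"
      obtain l1 where l1: "i1 = Suc l1" "l1 < n" using rowsn[OF i(1)] by (cases i1) auto
      obtain l2 where l2: "i2 = Suc l2" "l2 < n" using rowsn[OF i(2)] by (cases i2) auto
      have eq: "B l1 div 2 = B l2 div 2" using i(3) pt[of i1] pt[of i2] l1 l2 by simp
      have z: "B l1 div 2 \<in> Z1 (sym_top r p) (sym_bot r p)" using rowc[OF l1(2)] i(1) l1 by simp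
      show "i1 = i2"
      proof (rule ccontr)
        assume "i1 \<noteq> i2"
        then have "B l1 \<noteq> B l2" using injB l1 l2 unfolding inj_on_def by auto
        then have "(B l1 = 2*(B l1 div 2) \<and> B l2 = Suc (2*(B l1 div 2))) \<or> (B l2 = 2*(B l1 div 2) \<and> B l1 = Suc (2*(B l1 div 2)))"
          using div_aux eq by blast
        moreover have "B l1 \<in> Bs" "B l2 \<in> Bs" using l1 l2 unfolding Bs_def by auto
        ultimately show False using z Z1c[of "B l1 div 2"] by auto
      qed
    qed
  next
    show "ptilde r p ` HC_rows r p = Z1 (sym_top r p) (sym_bot r p)"
    proof
      show "ptilde r p ` HC_rows r p \<subseteq> Z1 (sym_top r p) (sym_bot r p)"
      proof
        fix x assume "x \<in> ptilde r p ` HC_rows r p"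
        then obtain i where i: "i \<in> HC_rows r p" "x = ptilde r p i" by auto
        obtain l where l: "i = Suc l" "l < n" using rowsn[OF i(1)] by (cases i) auto
        show "x \<in> Z1 (sym_top r p) (sym_bot r p)" using rowc[OF l(2)] i l pt[of i] by simp
      qed
    next
      show "Z1 (sym_top r p) (sym_bot r p) \<subseteq> ptilde r p ` HC_rows r p"
      proof
        fix x assume x: "x \<in> Z1 (sym_top r p) (sym_bot r p)"
        then have "2*x \<in> Bs \<or> Suc (2*x) \<in> Bs" using Z1c by auto
        then obtain l where l: "l < n" "B l = 2*x \<or> B l = Suc (2*x)" unfolding Bs_def by auto
        then have bx: "B l div 2 = x" by auto
        then have "Suc l \<in> HC_rows r p" using rowc[OF l(1)] x by simp
        moreover have "ptilde r p (Suc l) = x" using pt[of "Suc l"] l bx by simp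
        ultimately show "x \<in> ptilde r p ` HC_rows r p" by (metis imageI)
      qed
    qed
  qed
  have re_fst: "fst (row_end_square r p i) = i" for i unfolding row_end_square_def by simp
  have bij2: "bij_betw (row_end_square r p) (HC_rows r p) (HC r p)"
    unfolding bij_betw_def
  proof
    show "inj_on (row_end_square r p) (HC_rows r p)"
      by (rule inj_onI) (metis re_fst)
  next
    show "row_end_square r p ` HC_rows r p = HC r p"
    proof
      show "row_end_square r p ` HC_rows r p \<subseteq> HC r p"
        unfolding HC_rows_def row_end_square_def by auto
    next
      show "HC r p \<subseteq> row_end_square r p ` HC_rows r p"
      proof
        fix s assume s: "s \<in> HC r p"
        obtain i j where ij: "s = (i,j)" by force
        have c: "1 \<le> i" "1 \<le> j" "(i+j) mod 2 = r mod 2" "r+1 < i+j"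
            "(j = Q i + 1 \<and> (i = 1 \<or> j \<le> Q (i - 1))) \<or> (j = Q i \<and> Q (Suc i) < j)"
          using s ij HCchar by auto
        have "i \<le> n"
        proof (rule ccontr)
          assume h: "\<not> i \<le> n"
          then have Q0: "Q i = 0" unfolding Q_def by simp
          then have j1: "j = 1" "i = 1 \<or> 1 \<le> Q (i - 1)" using c by auto
          have "i - 1 \<le> k"
          proof (cases "i = 1")
            case False
            then show ?thesis using Qpos[of "i-1"] j1 c(1) by auto
          qed simp
          then have "i = Suc k" "n = k" using h nk by (auto split: if_splits)
          then have "r mod 2 \<noteq> k mod 2" using nk by (auto split: if_splits)
          moreover have "(Suc k + 1) mod 2 = k mod 2" by simp
          ultimately show False using c(3) j1 \<open>i = Suc k\<close> by simp
        qed
        have pq: "part (psharp r p) i = Q i" unfolding part_def q_def[symmetric] Q_def using c(1) \<open>i \<le> n\<close> by simp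
        have hr: "i \<in> HC_rows r p" unfolding HC_rows_def q_def[symmetric] n_def[symmetric]
          using c \<open>i \<le> n\<close> s ij pq unfolding q_def by auto
        have "row_end_square r p i = (i,j)"
        proof (cases "j = Q i")
          case True
          then show ?thesis unfolding row_end_square_def pq using s ij by simp
        next
          case False
          then have jj: "j = Q i + 1" using c by auto
          have "(i, Q i) \<notin> HC r p"
          proof
            assume "(i, Q i) \<in> HC r p"
            then have "(i + Q i) mod 2 = r mod 2" using HCchar by auto
            then show False using c(3) jj by presburger
          qed
          then show ?thesis unfolding row_end_square_def pq using jj by simp
        qed
        then show "s \<in> row_end_square r p ` HC_rows r p" using hr ij by (metis imageI)
      qed
    qed
  qed
  have "bij_betw (row_end_square r p \<circ> inv_into (HC_rows r p) (ptilde r p)) (Z1 (sym_top r p) (sym_bot r p)) (HC r p)"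
    by (rule bij_betw_trans[OF bij_betw_inv_into[OF bij1] bij2])
  then show ?thesis using bij1 bij2 by blast
qed

end
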